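(* Let $\mathcal{X}\subseteq\mathbb{R}^d$ be a nonempty closed convex set and consider the iterates $x_t,z_t$ and step sizes $\gamma_t$ of Algorithm AdaPEG (described in the context), run with arbitrary oracle answers $\widehat{F(x_t)}\in\mathbb{R}^d$. Then for every $t\ge1$, \[\langle\widehat{F(x_t)}-\widehat{F(x_{t-1})},x_t-z_t\rangle\le\frac1{\gamma_t}\left\|\widehat{F(x_t)}-\widehat{F(x_{t-1})}\right\|^2.\]
   Context: $\|\cdot\|$ is the Euclidean norm. Algorithm AdaPEG: $x_0=z_0\in\mathcal{X}$, $\gamma_0\ge0$, $\eta>0$. For $t=1,\dots,T$: $x_t=\arg\min_{u\in\mathcal{X}}\{\langle\widehat{F(x_{t-1})},u\rangle+\tfrac12\gamma_{t-1}\|u-z_{t-1}\|^2\}$; $\gamma_t=\frac1\eta\sqrt{\eta^2\gamma_0^2+\sum_{s=1}^t\|\widehat{F(x_s)}-\widehat{F(x_{s-1})}\|^2}$; $z_t=\arg\min_{u\in\mathcal{X}}\{\langle\widehat{F(x_t)},u\rangle+\tfrac12\gamma_{t-1}\|u-z_{t-1}\|^2+\tfrac12(\gamma_t-\gamma_{t-1})\|u-x_t\|^2\}$. *)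

theory Defs
  imports "HOL-Analysis.Analysis"
begin

definition is_minimizer :: "'a set \<Rightarrow> ('a \<Rightarrow> real) \<Rightarrow> 'a \<Rightarrow> bool" where
  "is_minimizer X phi u \<longleftrightarrow> u \<in> X \<and> (\<forall>v\<in>X. phi u \<le> phi v)"

text \<open>Iterates of AdaPEG with oracle answers g t (standing for the estimate of F at x t).\<close>
definition adapeg ::
  "('a::euclidean_space) set \<Rightarrow> real \<Rightarrow> (nat \<Rightarrow> 'a) \<Rightarrow> (nat \<Rightarrow> 'a) \<Rightarrow> (nat \<Rightarrow> 'a) \<Rightarrow> (nat \<Rightarrow> real) \<Rightarrow> bool"
where
  "adapeg X \<eta> g x z \<gamma> \<longleftrightarrow>
     x 0 \<in> X \<and> z 0 = x 0 \<and> \<gamma> 0 \<ge> 0 \<and>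
     (\<forall>t\<ge>1.
        is_minimizer X (\<lambda>u. inner (g (t - 1)) u + (1/2) * \<gamma> (t - 1) * (norm (u - z (t - 1)))\<^sup>2) (x t)
      \<and> \<gamma> t = (1/\<eta>) * sqrt (\<eta>\<^sup>2 * (\<gamma> 0)\<^sup>2 + (\<Sum>s=1..t. (norm (g s - g (s - 1)))\<^sup>2))
      \<and> is_minimizer X (\<lambda>u. inner (g t) u + (1/2) * \<gamma> (t - 1) * (norm (u - z (t - 1)))\<^sup>2
                              + (1/2) * (\<gamma> t - \<gamma> (t - 1)) * (norm (u - x t))\<^sup>2) (z t))"

end

theory Submission
  imports Defs
begin

lemma small_pos:
  fixes L Q :: real
  assumes "\<forall>s. 0 < s \<and> s \<le> 1 \<longrightarrow> 0 \<le> s * L + s\<^sup>2 * Q"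
  shows "L \<ge> 0"
proof (rule ccontr)
  assume "\<not> L \<ge> 0"
  hence L: "L < 0" by simp
  define s where "s = min 1 (- L / (2 * (\<bar>Q\<bar> + 1)))"
  have "0 < - L / (2 * (\<bar>Q\<bar> + 1))" using L by (intro divide_pos_pos) auto
  hence s0: "0 < s" by (simp add: s_def)
  have s1: "s \<le> 1" by (simp add: s_def)
  have "s \<le> - L / (2 * (\<bar>Q\<bar> + 1))" by (simp add: s_def)
  hence "s * (\<bar>Q\<bar> + 1) \<le> - L / (2 * (\<bar>Q\<bar> + 1)) * (\<bar>Q\<bar> + 1)"
    by (intro mult_right_mono) auto
  also have "\<dots> = - L / 2" by (simp add: field_simps)
  finally have "s * (\<bar>Q\<bar> + 1) \<le> - L / 2" .
  hence "s * Q \<le> - L / 2" by (smt (verit) s0 mult_left_mono abs_ge_self)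
  hence "L + s * Q < 0" using L by linarith
  hence "s * (L + s * Q) < 0" using s0 by (simp add: mult_pos_neg)
  moreover have "0 \<le> s * L + s\<^sup>2 * Q" using assms s0 s1 by blast
  ultimately show False by (simp add: power2_eq_square algebra_simps)
qed

lemma fo:
  fixes f :: "'a::real_vector \<Rightarrow> real"
  assumes "convex X" "x \<in> X" "u \<in> X" "\<forall>v\<in>X. f x \<le> f v"
    and "\<And>s. f (x + s *\<^sub>R (u - x)) = f x + s * L + s\<^sup>2 * Q"
  shows "L \<ge> 0"
proof (rule small_pos[of L Q], intro allI impI)
  fix s :: real assume s: "0 < s \<and> s \<le> 1"
  have "x + s *\<^sub>R (u - x) = (1 - s) *\<^sub>R x + s *\<^sub>R u" by (simp add: algebra_simps)
  also have "\<dots> \<in> X" using assms(1,2,3) s by (simp add: convexD_alt)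
  finally have "f x \<le> f (x + s *\<^sub>R (u - x))" using assms(4) by blast
  thus "0 \<le> s * L + s\<^sup>2 * Q" using assms(5)[of s] by simp
qed

lemma sq_expand0:
  fixes p w :: "'a::real_inner"
  shows "(norm (p + s *\<^sub>R w))\<^sup>2 = (norm p)\<^sup>2 + 2 * s * inner p w + s\<^sup>2 * (norm w)\<^sup>2"
  unfolding power2_norm_eq_inner
  by (simp add: inner_add_left inner_add_right inner_commute power2_eq_square algebra_simps)

lemma sq_expand:
  fixes x w b :: "'a::real_inner"
  shows "(norm (x + s *\<^sub>R w - b))\<^sup>2 = (norm (x - b))\<^sup>2 + 2 * s * inner (x - b) w + s\<^sup>2 * (norm w)\<^sup>2"
proof -
  have "x + s *\<^sub>R w - b = (x - b) + s *\<^sub>R w" by simp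
  thus ?thesis using sq_expand0[of "x - b" s w] by metis
qed

theorem lemmaB4:
  fixes X :: "('a::euclidean_space) set" and \<eta> :: real
    and g x z :: "nat \<Rightarrow> 'a" and \<gamma> :: "nat \<Rightarrow> real" and t :: nat
  assumes "X \<noteq> {}" and "closed X" and "convex X" and "\<eta> > 0"
    and "adapeg X \<eta> g x z \<gamma>"
    and "t \<ge> 1"
  shows "inner (g t - g (t - 1)) (x t - z t) \<le> (1 / \<gamma> t) * (norm (g t - g (t - 1)))\<^sup>2"
proof -
  have A: "x 0 \<in> X" "z 0 = x 0" "\<gamma> 0 \<ge> 0"
    and B: "\<And>t. t \<ge> 1 \<Longrightarrow> is_minimizer X (\<lambda>u. inner (g (t - 1)) u + (1/2) * \<gamma> (t - 1) * (norm (u - z (t - 1)))\<^sup>2) (x t)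
      \<and> \<gamma> t = (1/\<eta>) * sqrt (\<eta>\<^sup>2 * (\<gamma> 0)\<^sup>2 + (\<Sum>s=1..t. (norm (g s - g (s - 1)))\<^sup>2))
      \<and> is_minimizer X (\<lambda>u. inner (g t) u + (1/2) * \<gamma> (t - 1) * (norm (u - z (t - 1)))\<^sup>2
                              + (1/2) * (\<gamma> t - \<gamma> (t - 1)) * (norm (u - x t))\<^sup>2) (z t)"
    using assms(5) unfolding adapeg_def by blast+
  define \<Delta> where "\<Delta> = g t - g (t - 1)"
  define d where "d = x t - z t"
  define a where "a = \<gamma> (t - 1)"
  define c where "c = \<gamma> t"
  have gt: "\<gamma> t = (1/\<eta>) * sqrt (\<eta>\<^sup>2 * (\<gamma> 0)\<^sup>2 + (\<Sum>s=1..t. (norm (g s - g (s - 1)))\<^sup>2))"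
    using B[OF assms(6)] by blast
  note BB = B[OF assms(6)]
  have mx: "is_minimizer X (\<lambda>u. inner (g (t - 1)) u + (1/2) * a * (norm (u - z (t - 1)))\<^sup>2) (x t)"
    using conjunct1[OF BB] unfolding a_def .
  have mz: "is_minimizer X (\<lambda>u. inner (g t) u + (1/2) * a * (norm (u - z (t - 1)))\<^sup>2
                              + (1/2) * (c - a) * (norm (u - x t))\<^sup>2) (z t)"
    using conjunct2[OF conjunct2[OF BB]] unfolding a_def c_def .
  have xX: "x t \<in> X" and zX: "z t \<in> X" using mx mz unfolding is_minimizer_def by blast+
  have L1: "inner (g (t - 1)) (z t - x t) + a * inner (x t - z (t - 1)) (z t - x t) \<ge> 0"
  proof (rule fo[OF assms(3) xX zX])
    show "\<forall>v\<in>X. (\<lambda>u. inner (g (t - 1)) u + (1/2) * a * (norm (u - z (t - 1)))\<^sup>2) (x t)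
        \<le> (\<lambda>u. inner (g (t - 1)) u + (1/2) * a * (norm (u - z (t - 1)))\<^sup>2) v"
      using mx unfolding is_minimizer_def by blast
    fix s :: real
    show "(\<lambda>u. inner (g (t - 1)) u + (1/2) * a * (norm (u - z (t - 1)))\<^sup>2) (x t + s *\<^sub>R (z t - x t))
       = (\<lambda>u. inner (g (t - 1)) u + (1/2) * a * (norm (u - z (t - 1)))\<^sup>2) (x t)
         + s * (inner (g (t - 1)) (z t - x t) + a * inner (x t - z (t - 1)) (z t - x t))
         + s\<^sup>2 * ((1/2) * a * (norm (z t - x t))\<^sup>2)"
      by (simp only: sq_expand, simp add: inner_add_right inner_diff_left inner_diff_right inner_commute algebra_simps, (simp add: field_simps)?)
  qed
  have L2: "inner (g t) (x t - z t) + a * inner (z t - z (t - 1)) (x t - z t)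
            + (c - a) * inner (z t - x t) (x t - z t) \<ge> 0"
  proof (rule fo[OF assms(3) zX xX])
    show "\<forall>v\<in>X. (\<lambda>u. inner (g t) u + (1/2) * a * (norm (u - z (t - 1)))\<^sup>2
                              + (1/2) * (c - a) * (norm (u - x t))\<^sup>2) (z t)
        \<le> (\<lambda>u. inner (g t) u + (1/2) * a * (norm (u - z (t - 1)))\<^sup>2
                              + (1/2) * (c - a) * (norm (u - x t))\<^sup>2) v"
      using mz unfolding is_minimizer_def by blast
    fix s :: real
    show "(\<lambda>u. inner (g t) u + (1/2) * a * (norm (u - z (t - 1)))\<^sup>2
                              + (1/2) * (c - a) * (norm (u - x t))\<^sup>2) (z t + s *\<^sub>R (x t - z t))
       = (\<lambda>u. inner (g t) u + (1/2) * a * (norm (u - z (t - 1)))\<^sup>2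
                              + (1/2) * (c - a) * (norm (u - x t))\<^sup>2) (z t)
         + s * (inner (g t) (x t - z t) + a * inner (z t - z (t - 1)) (x t - z t)
            + (c - a) * inner (z t - x t) (x t - z t))
         + s\<^sup>2 * ((1/2) * a * (norm (x t - z t))\<^sup>2 + (1/2) * (c - a) * (norm (x t - z t))\<^sup>2)"
      by (simp only: sq_expand, simp add: inner_add_right inner_diff_left inner_diff_right inner_commute algebra_simps, (simp add: field_simps)?)
  qed
  have key: "c * (norm d)\<^sup>2 \<le> inner \<Delta> d"
  proof -
    have "inner (z t - x t) (x t - z t) = - (norm d)\<^sup>2"
      by (simp add: d_def power2_norm_eq_inner inner_commute inner_minus_left[symmetric])
    moreover have "inner (x t - z (t - 1)) (z t - x t) + inner (z t - z (t - 1)) (x t - z t) = - (norm d)\<^sup>2"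
      by (simp add: d_def power2_norm_eq_inner inner_diff_left inner_diff_right inner_commute algebra_simps)
    moreover have "inner (g (t - 1)) (z t - x t) + inner (g t) (x t - z t) = inner \<Delta> d"
      by (simp add: \<Delta>_def d_def inner_diff_left inner_diff_right algebra_simps)
    ultimately show ?thesis using L1 L2
    proof -
      assume e1: "inner (z t - x t) (x t - z t) = - (norm d)\<^sup>2"
        and e2: "inner (x t - z (t - 1)) (z t - x t) + inner (z t - z (t - 1)) (x t - z t) = - (norm d)\<^sup>2"
        and e3: "inner (g (t - 1)) (z t - x t) + inner (g t) (x t - z t) = inner \<Delta> d"
      have "0 \<le> (inner (g (t - 1)) (z t - x t) + inner (g t) (x t - z t))
          + a * (inner (x t - z (t - 1)) (z t - x t) + inner (z t - z (t - 1)) (x t - z t))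
          + (c - a) * inner (z t - x t) (x t - z t)"
        using L1 L2 by (simp add: distrib_left)
      also have "\<dots> = inner \<Delta> d - c * (norm d)\<^sup>2" unfolding e1 e2 e3 by (simp add: algebra_simps)
      finally show ?thesis by simp
    qed
  qed
  show ?thesis
  proof (cases "c = 0")
    case True
    have "(\<Sum>s=1..t. (norm (g s - g (s - 1)))\<^sup>2) = 0"
    proof -
      have "sqrt (\<eta>\<^sup>2 * (\<gamma> 0)\<^sup>2 + (\<Sum>s=1..t. (norm (g s - g (s - 1)))\<^sup>2)) = 0"
        using gt True assms(4) by (simp add: c_def)
      hence "\<eta>\<^sup>2 * (\<gamma> 0)\<^sup>2 + (\<Sum>s=1..t. (norm (g s - g (s - 1)))\<^sup>2) = 0" by simp
      moreover have "(\<Sum>s=1..t. (norm (g s - g (s - 1)))\<^sup>2) \<ge> 0" by (simp add: sum_nonneg)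
      moreover have "\<eta>\<^sup>2 * (\<gamma> 0)\<^sup>2 \<ge> 0" by simp
      ultimately show ?thesis by linarith
    qed
    moreover have "(norm \<Delta>)\<^sup>2 \<le> (\<Sum>s=1..t. (norm (g s - g (s - 1)))\<^sup>2)"
      unfolding \<Delta>_def using assms(6)
      by (intro member_le_sum) auto
    ultimately have "\<Delta> = 0" by (smt (verit) zero_le_power2 power_eq_0_iff norm_eq_zero)
    thus ?thesis by (simp add: \<Delta>_def)
  next
    case False
    have "0 \<le> \<eta>\<^sup>2 * (\<gamma> 0)\<^sup>2 + (\<Sum>s=1..t. (norm (g s - g (s - 1)))\<^sup>2)"
      by (intro add_nonneg_nonneg sum_nonneg) auto
    hence c0: "c \<ge> 0" using gt assms(4) by (simp add: c_def)
    hence cp: "c > 0" using False by simp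
    have cs: "inner \<Delta> d \<le> norm \<Delta> * norm d" by (rule norm_cauchy_schwarz)
    have "c * norm d \<le> norm \<Delta>"
    proof (cases "norm d = 0")
      case True thus ?thesis by simp
    next
      case False
      hence "norm d > 0" by simp
      have "(c * norm d) * norm d \<le> norm \<Delta> * norm d" using key cs by (simp add: power2_eq_square algebra_simps)
      thus ?thesis using \<open>norm d > 0\<close> by simp
    qed
    hence "norm \<Delta> * (c * norm d) \<le> norm \<Delta> * norm \<Delta>" by (simp add: mult_left_mono)
    hence "c * inner \<Delta> d \<le> (norm \<Delta>)\<^sup>2" using cs cp
      by (smt (verit) mult_left_mono power2_eq_square mult.commute mult.left_commute)
    hence "inner \<Delta> d \<le> (1 / c) * (norm \<Delta>)\<^sup>2" using cp by (simp add: field_simps)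
    thus ?thesis by (simp add: \<Delta>_def d_def c_def)
  qed
qed

end
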